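(* Let $(\Omega,\Sigma,\mu)$ be a measure space with the direct sum property and $L^0=L^0(\Omega,\Sigma,\mu)$. For every nonzero derivation $\delta:L^0\to L^0$ there exist a sequence $(\lambda_n)_{n=1}^\infty$ in $L^0$ with $|\lambda_n|\le\mathbf 1$ for all $n\in\mathbb N$, and a nonzero idempotent $\pi\in\nabla$, such that $$|\delta(\lambda_n)|\ge n\pi\quad\text{for all } n\in\mathbb N.$$
   Context: $L^0(\Omega,\Sigma,\mu)$ is the algebra of equivalence classes (a.e. equality) of complex measurable functions, with unit $\mathbf 1$ and the usual a.e. order on real-valued elements; $\mu$ has the direct sum property: there is a family $\{\Omega_i\}_{i\in J}\subset\Sigma$, $0<\mu(\Omega_i)<\infty$, such that each $A\in\Sigma$ of finite measure equals $\bigcup_{i\in J_0}(A\cap\Omega_i)\cup B$ with $J_0$ countable and $B$ null. A derivation is a linear map $\delta$ with $\delta(xy)=\delta(x)y+x\delta(y)$. $\nabla=\{\tilde\chi_A:A\in\Sigma\}$ is the set of idempotents of $L^0$ (classes of characteristic functions of measurable sets). *)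

theory Defs
  imports "HOL-Probability.Probability"
begin

text \<open>Elements of L0(M) are represented by complex-valued measurable functions;
  equality in L0 is equality almost everywhere.\<close>

definition L0 :: "'a measure \<Rightarrow> ('a \<Rightarrow> complex) set" where
  "L0 M = borel_measurable M"

definition ae_eq :: "'a measure \<Rightarrow> ('a \<Rightarrow> complex) \<Rightarrow> ('a \<Rightarrow> complex) \<Rightarrow> bool" where
  "ae_eq M f g \<longleftrightarrow> (AE x in M. f x = g x)"

definition direct_sum_property :: "'a measure \<Rightarrow> bool" where
  "direct_sum_property M \<longleftrightarrow>
    (\<exists>(J::'a set set). J \<subseteq> sets M \<and>
       (\<forall>W\<in>J. 0 < emeasure M W \<and> emeasure M W < \<infinity>) \<and>
       (\<forall>A\<in>sets M. emeasure M A < \<infinity> \<longrightarrow>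
          (\<exists>J0 B. J0 \<subseteq> J \<and> countable J0 \<and> B \<in> null_sets M \<and>
                 A = (\<Union>W\<in>J0. A \<inter> W) \<union> B)))"

text \<open>A derivation of L0(M), given on representatives: it maps L0 to L0,
  respects a.e. equality (so is well defined on classes), is complex-linear
  and satisfies the Leibniz rule, all modulo a.e. equality.\<close>
definition L0_derivation :: "'a measure \<Rightarrow> (('a \<Rightarrow> complex) \<Rightarrow> ('a \<Rightarrow> complex)) \<Rightarrow> bool" where
  "L0_derivation M \<delta> \<longleftrightarrow>
    (\<forall>f\<in>L0 M. \<delta> f \<in> L0 M) \<and>
    (\<forall>f\<in>L0 M. \<forall>g\<in>L0 M. ae_eq M f g \<longrightarrow> ae_eq M (\<delta> f) (\<delta> g)) \<and>
    (\<forall>f\<in>L0 M. \<forall>g\<in>L0 M. ae_eq M (\<delta> (\<lambda>x. f x + g x)) (\<lambda>x. \<delta> f x + \<delta> g x)) \<and>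
    (\<forall>c. \<forall>f\<in>L0 M. ae_eq M (\<delta> (\<lambda>x. c * f x)) (\<lambda>x. c * \<delta> f x)) \<and>
    (\<forall>f\<in>L0 M. \<forall>g\<in>L0 M. ae_eq M (\<delta> (\<lambda>x. f x * g x)) (\<lambda>x. \<delta> f x * g x + f x * \<delta> g x))"

definition nonzero_on_L0 :: "'a measure \<Rightarrow> (('a \<Rightarrow> complex) \<Rightarrow> ('a \<Rightarrow> complex)) \<Rightarrow> bool" where
  "nonzero_on_L0 M \<delta> \<longleftrightarrow> (\<exists>f\<in>L0 M. \<not> ae_eq M (\<delta> f) (\<lambda>x. 0))"

end

theory Submission
  imports Defs
begin

lemma deriv_ind:
  assumes d: "L0_derivation M \<delta>" and S: "S \<in> sets M"
  shows "AE x in M. \<delta> (\<lambda>x. indicator S x :: complex) x = 0"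
proof -
  let ?i = "\<lambda>x. indicator S x :: complex"
  have iL: "?i \<in> L0 M" unfolding L0_def using S by simp
  have eq: "(\<lambda>x. ?i x * ?i x) = ?i" by (auto simp: indicator_def)
  have "ae_eq M (\<delta> (\<lambda>x. ?i x * ?i x)) (\<lambda>x. \<delta> ?i x * ?i x + ?i x * \<delta> ?i x)"
    using d iL unfolding L0_derivation_def by blast
  then have "AE x in M. \<delta> ?i x = \<delta> ?i x * ?i x + ?i x * \<delta> ?i x"
    unfolding ae_eq_def eq .
  then show ?thesis
  proof eventually_elim
    case (elim x) then show ?case by (cases "x \<in> S") (auto simp: indicator_def)
  qed
qed

lemma deriv_countable:
  assumes d: "L0_derivation M \<delta>" and g: "g \<in> L0 M" and D: "countable D"
    and gD: "\<And>x. x \<in> space M \<Longrightarrow> g x \<in> D"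
  shows "AE x in M. \<delta> g x = 0"
proof -
  have "\<forall>c\<in>D. AE x in M. indicator (g -` {c} \<inter> space M) x * \<delta> g x = 0"
  proof
    fix c assume "c \<in> D"
    define S where "S = g -` {c} \<inter> space M"
    have S: "S \<in> sets M" unfolding S_def using g unfolding L0_def by measurable
    let ?i = "\<lambda>x. indicator S x :: complex"
    have iL: "?i \<in> L0 M" unfolding L0_def using S by simp
    have eq: "(\<lambda>x. ?i x * g x) = (\<lambda>x. c * ?i x)" by (auto simp: indicator_def S_def)
    have 1: "ae_eq M (\<delta> (\<lambda>x. ?i x * g x)) (\<lambda>x. \<delta> ?i x * g x + ?i x * \<delta> g x)"
      using d iL g unfolding L0_derivation_def by blast
    have 2: "ae_eq M (\<delta> (\<lambda>x. c * ?i x)) (\<lambda>x. c * \<delta> ?i x)"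
      using d iL unfolding L0_derivation_def by blast
    have 3: "AE x in M. \<delta> ?i x = 0" using deriv_ind[OF d S] .
    from 1 2 3 show "AE x in M. indicator S x * \<delta> g x = 0"
      unfolding ae_eq_def eq by eventually_elim auto
  qed
  then have "AE x in M. \<forall>c\<in>D. indicator (g -` {c} \<inter> space M) x * \<delta> g x = 0"
    using AE_ball_countable'[where I=D and M=M and P="\<lambda>c x. indicator (g -` {c} \<inter> space M) x * \<delta> g x = 0", OF _ D] by blast
  with AE_space show ?thesis
  proof eventually_elim
    case (elim x)
    then have "indicator (g -` {g x} \<inter> space M) x * \<delta> g x = 0" using gD by blast
    then show ?case using elim by (simp add: indicator_def)
  qed
qed

lemma round_bound:
  fixes e :: real and z :: complex
  assumes e: "e > 0"
  shows "cmod (z + (-1) * (complex_of_real e * (of_int \<lfloor>Re z / e\<rfloor> + \<i> * of_int \<lfloor>Im z / e\<rfloor>))) \<le> 2 * e"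
proof -
  let ?a = "\<lfloor>Re z / e\<rfloor>" and ?b = "\<lfloor>Im z / e\<rfloor>"
  have a1: "real_of_int ?a \<le> Re z / e" and a2: "Re z / e < real_of_int ?a + 1" by linarith+
  have b1: "real_of_int ?b \<le> Im z / e" and b2: "Im z / e < real_of_int ?b + 1" by linarith+
  have ra: "\<bar>Re z - e * of_int ?a\<bar> \<le> e"
  proof -
    have "of_int ?a * e \<le> Re z" using a1 pos_le_divide_eq[OF e] by blast
    moreover have "Re z < (of_int ?a + 1) * e" using a2 pos_divide_less_eq[OF e] by blast
    ultimately show ?thesis by (simp add: algebra_simps)
  qed
  have rb: "\<bar>Im z - e * of_int ?b\<bar> \<le> e"
  proof -
    have "of_int ?b * e \<le> Im z" using b1 pos_le_divide_eq[OF e] by blast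
    moreover have "Im z < (of_int ?b + 1) * e" using b2 pos_divide_less_eq[OF e] by blast
    ultimately show ?thesis by (simp add: algebra_simps)
  qed
  let ?w = "z + (-1) * (complex_of_real e * (of_int ?a + \<i> * of_int ?b))"
  have "Re ?w = Re z - e * of_int ?a" "Im ?w = Im z - e * of_int ?b" by simp_all
  then have "cmod ?w \<le> \<bar>Re z - e * of_int ?a\<bar> + \<bar>Im z - e * of_int ?b\<bar>"
    using cmod_le[of ?w] by simp
  with ra rb show ?thesis by linarith
qed

theorem lemma3p3:
  fixes M :: "'a measure" and \<delta> :: "('a \<Rightarrow> complex) \<Rightarrow> ('a \<Rightarrow> complex)"
  assumes "direct_sum_property M"
    and "L0_derivation M \<delta>"
    and "nonzero_on_L0 M \<delta>"
  shows "\<exists>(lam :: nat \<Rightarrow> 'a \<Rightarrow> complex) A.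
           (\<forall>n. lam n \<in> L0 M \<and> (AE x in M. cmod (lam n x) \<le> 1)) \<and>
           A \<in> sets M \<and> A \<notin> null_sets M \<and>
           (\<forall>n\<ge>1. AE x in M. real n * indicator A x \<le> cmod (\<delta> (lam n) x))"
proof -
  note d = assms(2)
  obtain f where f: "f \<in> L0 M" and nz: "\<not> ae_eq M (\<delta> f) (\<lambda>x. 0)"
    using assms(3) unfolding nonzero_on_L0_def by blast
  have dfL: "\<delta> f \<in> L0 M" using d f unfolding L0_derivation_def by blast
  define B where "B k = {x \<in> space M. 1 / real (Suc k) \<le> cmod (\<delta> f x)}" for k
  have Bs: "B k \<in> sets M" for k unfolding B_def using dfL unfolding L0_def by measurable
  obtain k where k: "B k \<notin> null_sets M"
  proof (rule ccontr)
    assume "\<not> ?thesis"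
    then have "\<forall>k. B k \<in> null_sets M" using that by blast
    then have "\<forall>k. AE x in M. x \<notin> B k" using AE_not_in by blast
    then have "AE x in M. \<forall>k. x \<notin> B k" by (simp add: AE_all_countable)
    then have "AE x in M. \<delta> f x = 0" using AE_space
    proof eventually_elim
      case (elim x)
      show ?case
      proof (rule ccontr)
        assume "\<delta> f x \<noteq> 0"
        then have "cmod (\<delta> f x) > 0" by simp
        then obtain m where "inverse (real (Suc m)) < cmod (\<delta> f x)"
          using reals_Archimedean by blast
        then have "1 / real (Suc m) \<le> cmod (\<delta> f x)" by (simp add: inverse_eq_divide)
        then have "x \<in> B m" using elim unfolding B_def by simp
        with elim show False by blast
      qed
    qed
    with nz show False unfolding ae_eq_def by simp
  qed
  define K where "K = real (Suc k)"
  define N where "N n = real n * K" for n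
  define e where "e n = 1 / (2 * N n)" for n
  define g where "g n = (\<lambda>x. complex_of_real (e n) * (of_int \<lfloor>Re (f x) / e n\<rfloor> + \<i> * of_int \<lfloor>Im (f x) / e n\<rfloor>))" for n
  define lam where "lam n = (\<lambda>x. complex_of_real (N n) * (f x + (-1) * g n x))" for n
  have fm: "f \<in> borel_measurable M" using f unfolding L0_def .
  have gL: "g n \<in> L0 M" for n unfolding L0_def g_def using fm by measurable
  have hL: "(\<lambda>x. (-1) * g n x) \<in> L0 M" for n using gL unfolding L0_def by measurable
  have sL: "(\<lambda>x. f x + (-1) * g n x) \<in> L0 M" for n using hL fm unfolding L0_def by measurable
  have lamL: "lam n \<in> L0 M" for n using sL unfolding L0_def lam_def by measurable
  have dg: "AE x in M. \<delta> (g n) x = 0" for n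
  proof (rule deriv_countable[OF d gL])
    show "countable ((\<lambda>(a,b). complex_of_real (e n) * (of_int a + \<i> * of_int b)) ` (UNIV :: (int \<times> int) set))"
      by simp
    show "g n x \<in> (\<lambda>(a,b). complex_of_real (e n) * (of_int a + \<i> * of_int b)) ` (UNIV :: (int \<times> int) set)" for x
      unfolding g_def by (rule image_eqI[where x="(\<lfloor>Re (f x) / e n\<rfloor>, \<lfloor>Im (f x) / e n\<rfloor>)"]) auto
  qed
  have dlam: "AE x in M. \<delta> (lam n) x = complex_of_real (N n) * \<delta> f x" for n
  proof -
    have lin: "\<And>c h. h \<in> L0 M \<Longrightarrow> ae_eq M (\<delta> (\<lambda>x. c * h x)) (\<lambda>x. c * \<delta> h x)"
      using d unfolding L0_derivation_def by blast
    have add: "\<And>h1 h2. h1 \<in> L0 M \<Longrightarrow> h2 \<in> L0 M \<Longrightarrow> ae_eq M (\<delta> (\<lambda>x. h1 x + h2 x)) (\<lambda>x. \<delta> h1 x + \<delta> h2 x)"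
      using d unfolding L0_derivation_def by blast
    have 1: "ae_eq M (\<delta> (lam n)) (\<lambda>x. complex_of_real (N n) * \<delta> (\<lambda>x. f x + (-1) * g n x) x)"
      using lin[OF sL[of n], of "complex_of_real (N n)"] unfolding lam_def .
    have 2: "ae_eq M (\<delta> (\<lambda>x. f x + (-1) * g n x)) (\<lambda>x. \<delta> f x + \<delta> (\<lambda>x. (-1) * g n x) x)"
      using add[OF f hL[of n]] .
    have 3: "ae_eq M (\<delta> (\<lambda>x. (-1) * g n x)) (\<lambda>x. (-1) * \<delta> (g n) x)"
      using lin[OF gL[of n], of "-1"] .
    from 1 2 3 dg[of n] show ?thesis unfolding ae_eq_def by eventually_elim simp
  qed
  have bnd: "cmod (lam n x) \<le> 1" for n x
  proof (cases "n = 0")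
    case True then show ?thesis by (simp add: lam_def N_def)
  next
    case False
    then have Np: "N n > 0" unfolding N_def K_def by simp
    then have ep: "e n > 0" unfolding e_def by simp
    have "cmod (f x + (-1) * g n x) \<le> 2 * e n"
      unfolding g_def using round_bound[OF ep, of "f x"] .
    then have "N n * cmod (f x + (-1) * g n x) \<le> N n * (2 * e n)"
      using Np by (intro mult_left_mono) auto
    also have "\<dots> = 1" unfolding e_def using Np by simp
    finally show ?thesis unfolding lam_def using Np by (simp add: norm_mult)
  qed
  show ?thesis
  proof (intro exI[of _ lam] exI[of _ "B k"] conjI allI impI)
    fix n show "lam n \<in> L0 M" by (rule lamL)
    show "AE x in M. cmod (lam n x) \<le> 1" using bnd by simp
  next
    show "B k \<in> sets M" by (rule Bs)
    show "B k \<notin> null_sets M" by (rule k)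
  next
    fix n :: nat assume "1 \<le> n"
    show "AE x in M. real n * indicator (B k) x \<le> cmod (\<delta> (lam n) x)"
      using dlam[of n]
    proof eventually_elim
      case (elim x)
      show ?case
      proof (cases "x \<in> B k")
        case True
        then have "1 / K \<le> cmod (\<delta> f x)" unfolding B_def K_def by simp
        then have "real n * K * (1 / K) \<le> real n * K * cmod (\<delta> f x)"
          by (intro mult_left_mono) (auto simp: K_def)
        then have "real n \<le> N n * cmod (\<delta> f x)" unfolding N_def K_def by simp
        moreover have "N n \<ge> 0" unfolding N_def K_def by simp
        ultimately show ?thesis using True elim by (simp add: norm_mult)
      next
        case False
        then show ?thesis by simp
      qed
    qed
  qed
qed

end
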